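(* Let $e:\mathbb{R}^n\to\mathbb{R}^n$ and $f:\mathbb{R}^n\times\mathbb{R}^m\to\mathbb{R}^n$ be continuously differentiable, consider the implicit model $e(x_{t+1})=f(x_t,u_t)$, and let $\alpha\in(0,1)$. Suppose there exists $\epsilon>0$ with $E(x)+E(x)^\top\succ\epsilon I$ for all $x$, and that for all $(x,u)$: $$F(x,u)\ge 0,\quad K(x,u)\ge 0,\quad E(x)\in\mathbb{M}^n,\quad \mathbf{1}^\top\big(\alpha E(x)-F(x,u)\big)\ge 0 .$$ Then the model is well-posed, monotone, and contracting with rate $\alpha$. If in addition $e(0)=f(0,0)$, the model is also positive.
   Context: Consider discrete-time implicit models $e(x_{t+1})=f(x_t,u_t)$, $t=0,1,2,\dots$, with state $x_t\in\mathbb{R}^n$ and input $u_t\in\mathbb{R}^m$, where $e$ and $f$ are continuously differentiable. Write $E=\partial e/\partial x$, $F=\partial f/\partial x$, $K=\partial f/\partial u$. The model is well-posed if for every $(x_t,u_t)$ there is a unique $x_{t+1}$ satisfying the model equation. A well-posed system is contracting with rate $\alpha\in(0,1)$ if there is $p\in[1,\infty]$ such that for any two initial conditions $x^a_0,x^b_0$ and any common input sequence there exists a continuous function $b_p(x^a_0,x^b_0)>0$ with $|x^a_t-x^b_t|_p<\alpha^t b_p(x^a_0,x^b_0)$ for all $t$. It is monotone if $x^a_0\ge x^b_0$ and $u^a_t\ge u^b_t$ for all $t$ imply $x^a_t\ge x^b_t$ for all $t$. It is positive if $x_0\ge0$ and $u_t\ge 0$ for all $t$ imply $x_t\ge0$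 for all $t$. Inequalities between vectors/matrices are elementwise; $\mathbf{1}$ is the all-ones column vector; $M\succ0$ means positive definite. $\mathbb{M}^n$ is the set of $n\times n$ nonsingular M-matrices: real matrices with all off-diagonal entries $\le0$ and all eigenvalues having positive real part. *)

theory Defs
  imports "HOL-Analysis.Analysis"
begin

text \<open>Implicit model  e(x_{t+1}) = f(x_t, u_t)  with x in R^n (real^'n), u in R^m (real^'m).
  Orderings on vectors and matrices are the library's componentwise ones.\<close>

definition well_posed :: "(real^'n \<Rightarrow> real^'n) \<Rightarrow> (real^'n \<Rightarrow> real^'m \<Rightarrow> real^'n) \<Rightarrow> bool" where
  "well_posed e f \<longleftrightarrow> (\<forall>x u. \<exists>!y. e y = f x u)"

definition is_traj :: "(real^'n \<Rightarrow> real^'n) \<Rightarrow> (real^'n \<Rightarrow> real^'m \<Rightarrow> real^'n)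
    \<Rightarrow> (nat \<Rightarrow> real^'n) \<Rightarrow> (nat \<Rightarrow> real^'m) \<Rightarrow> bool" where
  "is_traj e f x u \<longleftrightarrow> (\<forall>t. e (x (Suc t)) = f (x t) (u t))"

definition pnorm :: "ereal \<Rightarrow> real^'n \<Rightarrow> real" where
  "pnorm p x = (if p = \<infinity> then Max (range (\<lambda>i. \<bar>x $ i\<bar>))
                else (\<Sum>i\<in>UNIV. \<bar>x $ i\<bar> powr real_of_ereal p) powr (1 / real_of_ereal p))"

definition contracting :: "(real^'n \<Rightarrow> real^'n) \<Rightarrow> (real^'n \<Rightarrow> real^'m \<Rightarrow> real^'n) \<Rightarrow> real \<Rightarrow> bool" where
  "contracting e f \<alpha> \<longleftrightarrow> well_posed e f \<and>
     (\<exists>p::ereal. 1 \<le> p \<and>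
        (\<forall>u::nat \<Rightarrow> real^'m. \<exists>b :: (real^'n) \<times> (real^'n) \<Rightarrow> real.
            continuous_on UNIV b \<and> (\<forall>z. b z > 0) \<and>
            (\<forall>xa xb. is_traj e f xa u \<longrightarrow> is_traj e f xb u \<longrightarrow>
               (\<forall>t. pnorm p (xa t - xb t) < \<alpha> ^ t * b (xa 0, xb 0)))))"

definition monotone_sys :: "(real^'n \<Rightarrow> real^'n) \<Rightarrow> (real^'n \<Rightarrow> real^'m \<Rightarrow> real^'n) \<Rightarrow> bool" where
  "monotone_sys e f \<longleftrightarrow>
     (\<forall>xa xb ua ub. is_traj e f xa ua \<longrightarrow> is_traj e f xb ub \<longrightarrow>
        xa 0 \<ge> xb 0 \<longrightarrow> (\<forall>t. ua t \<ge> ub t) \<longrightarrow> (\<forall>t. xa t \<ge> xb t))"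

definition positive_sys :: "(real^'n \<Rightarrow> real^'n) \<Rightarrow> (real^'n \<Rightarrow> real^'m \<Rightarrow> real^'n) \<Rightarrow> bool" where
  "positive_sys e f \<longleftrightarrow>
     (\<forall>x u. is_traj e f x u \<longrightarrow> x 0 \<ge> 0 \<longrightarrow> (\<forall>t. u t \<ge> 0) \<longrightarrow> (\<forall>t. x t \<ge> 0))"

definition cmat :: "real^'n^'n \<Rightarrow> complex^'n^'n" where
  "cmat A = (\<chi> i j. complex_of_real (A $ i $ j))"

definition M_matrix :: "real^'n^'n \<Rightarrow> bool" where
  "M_matrix A \<longleftrightarrow> (\<forall>i j. i \<noteq> j \<longrightarrow> A $ i $ j \<le> 0) \<and>
     (\<forall>c::complex. (\<exists>v::complex^'n. v \<noteq> 0 \<and> cmat A *v v = c *s v) \<longrightarrow> Re c > 0)"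

definition pos_def :: "real^'n^'n \<Rightarrow> bool" where
  "pos_def M \<longleftrightarrow> M = transpose M \<and> (\<forall>v. v \<noteq> 0 \<longrightarrow> v \<bullet> (M *v v) > 0)"

end

theory Submission
  imports Defs
begin

lemma pd_half:
  fixes A :: "real^'n^'n"
  assumes "pos_def (A + transpose A - \<epsilon> *\<^sub>R mat 1)"
  shows "v \<bullet> (A *v v) \<ge> \<epsilon>/2 * (v \<bullet> v)"
proof (cases "v = 0")
  case True then show ?thesis by simp
next
  case False
  with assms have "v \<bullet> ((A + transpose A - \<epsilon> *\<^sub>R mat 1) *v v) > 0" unfolding pos_def_def by blast
  moreover have "v \<bullet> ((A + transpose A - \<epsilon> *\<^sub>R mat 1) *v v) = 2 * (v \<bullet> (A *v v)) - \<epsilon> * (v \<bullet> v)"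
  proof -
    have "v \<bullet> (transpose A *v v) = v \<bullet> (A *v v)"
      by (metis dot_lmul_matrix inner_commute transpose_matrix_vector)
    moreover have "(A + transpose A - \<epsilon> *\<^sub>R mat 1) *v v = A *v v + transpose A *v v - \<epsilon> *\<^sub>R v"
      by (simp add: matrix_vector_mult_add_rdistrib matrix_vector_mult_diff_rdistrib flip: scaleR_matrix_vector_assoc)
    ultimately show ?thesis by (simp add: inner_diff_right inner_add_right)
  qed
  ultimately show ?thesis by simp
qed

definition negp :: "real^'n \<Rightarrow> real^'n" where "negp d = (\<chi> i. min (d$i) 0)"

lemma Z_key:
  fixes A :: "real^'n^'n"
  assumes Z: "\<And>i j. i \<noteq> j \<Longrightarrow> A $ i $ j \<le> 0"
  shows "negp d \<bullet> (A *v d) \<ge> negp d \<bullet> (A *v negp d)"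
proof -
  define p where "p = (\<chi> i. max (d$i) 0)"
  have d: "d = negp d + p" by (simp add: vec_eq_iff negp_def p_def min_def max_def)
  have "negp d \<bullet> (A *v p) = (\<Sum>i\<in>UNIV. \<Sum>j\<in>UNIV. negp d $ i * A $ i $ j * p $ j)"
    by (simp add: inner_vec_def matrix_vector_mult_def sum_distrib_left mult.assoc)
  also have "\<dots> \<ge> 0"
  proof (intro sum_nonneg)
    fix i j
    show "0 \<le> negp d $ i * A $ i $ j * p $ j"
    proof (cases "i = j")
      case True then show ?thesis by (simp add: negp_def p_def min_def max_def)
    next
      case False
      have "negp d $ i * A $ i $ j \<ge> 0" using Z[OF False] by (simp add: negp_def mult_nonpos_nonpos)
      moreover have "p $ j \<ge> 0" by (simp add: p_def)
      ultimately show ?thesis by simp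
    qed
  qed
  finally have "negp d \<bullet> (A *v p) \<ge> 0" .
  then show ?thesis
    by (subst (2) d) (simp add: matrix_vector_right_distrib inner_add_right)
qed

lemma negp_le: "negp d \<bullet> w \<le> 0" if "w \<ge> 0" for w :: "real^'n"
  using that unfolding inner_vec_def negp_def less_eq_vec_def
  by (auto intro!: sum_nonpos simp: mult_nonpos_nonneg)

lemma negp_zero: "negp d = 0 \<Longrightarrow> d \<ge> 0"
  by (auto simp: negp_def vec_eq_iff less_eq_vec_def min_def split: if_splits) (metis linear)

lemma Z_pos:
  fixes A :: "real^'n^'n"
  assumes Z: "\<And>i j. i \<noteq> j \<Longrightarrow> A $ i $ j \<le> 0"
    and pd: "\<And>v. v \<bullet> (A *v v) \<ge> c * (v \<bullet> v)" and c: "c > 0"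
    and w: "negp d \<bullet> (A *v d) \<le> 0"
  shows "d \<ge> 0"
proof -
  have "c * (negp d \<bullet> negp d) \<le> 0" using pd[of "negp d"] Z_key[OF Z, of d] w by linarith
  then have "negp d \<bullet> negp d \<le> 0" using c by (simp add: mult_le_0_iff)
  then have "negp d = 0" using inner_ge_zero[of "negp d"] by (simp del: inner_ge_zero)
  then show ?thesis by (rule negp_zero)
qed


lemma mvt_line:
  fixes g :: "'a::real_normed_vector \<Rightarrow> real^'k"
  assumes der: "\<And>x. (g has_derivative D x) (at x)"
  shows "\<exists>\<tau>\<in>{0<..<1}. w \<bullet> (g b - g a) = w \<bullet> D (a + \<tau> *\<^sub>R (b - a)) (b - a)"
proof -
  define \<phi> where "\<phi> \<tau> = w \<bullet> g (a + \<tau> *\<^sub>R (b - a))" for \<tau>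
  have "(\<phi> has_derivative (\<lambda>h. w \<bullet> D (a + \<tau> *\<^sub>R (b - a)) (h *\<^sub>R (b - a)))) (at \<tau> within {0..1})" for \<tau>
  proof -
    have l: "((\<lambda>\<tau>. a + \<tau> *\<^sub>R (b - a)) has_derivative (\<lambda>h. h *\<^sub>R (b-a))) (at \<tau>)"
      by (auto intro!: derivative_eq_intros)
    have "((\<lambda>\<tau>. g (a + \<tau> *\<^sub>R (b - a))) has_derivative (D (a + \<tau> *\<^sub>R (b - a)) \<circ> (\<lambda>h. h *\<^sub>R (b-a)))) (at \<tau>)"
      using diff_chain_at[OF l der] by (simp add: o_def)
    from has_derivative_inner_right[OF this, of w]
    show ?thesis unfolding \<phi>_def o_def by (rule has_derivative_at_withinI)
  qed
  from mvt_simple[of 0 1 \<phi>, OF _ this] obtain \<tau> where "\<tau>\<in>{0<..<1}"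
    "\<phi> 1 - \<phi> 0 = w \<bullet> D (a + \<tau> *\<^sub>R (b - a)) (1 *\<^sub>R (b - a))" by auto
  then show ?thesis by (auto simp: \<phi>_def inner_diff_right)
qed


lemma inner_nonneg_vec: "(v::real^'n) \<ge> 0 \<Longrightarrow> w \<ge> 0 \<Longrightarrow> v \<bullet> w \<ge> 0"
  unfolding inner_vec_def less_eq_vec_def by (auto intro!: sum_nonneg)

lemma mat_nonneg: "(A::real^'m^'n) \<ge> 0 \<Longrightarrow> v \<ge> 0 \<Longrightarrow> A *v v \<ge> 0"
  unfolding matrix_vector_mult_def less_eq_vec_def by (auto intro!: sum_nonneg)

lemma sgn_bound:
  fixes s w :: "real^'n"
  assumes "\<And>i. \<bar>s$i\<bar> \<le> 1" "w \<ge> 0"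
  shows "s \<bullet> w \<le> vec 1 \<bullet> w" "- (s \<bullet> w) \<le> vec 1 \<bullet> w"
proof -
  have "s$i * w$i \<le> w$i \<and> - (s$i * w$i) \<le> w$i" for i
  proof -
    have w: "w$i \<ge> 0" using assms(2) by (simp add: less_eq_vec_def)
    have "\<bar>s$i * w$i\<bar> \<le> w$i" using assms(1)[of i] w
      by (simp add: abs_mult mult_left_le_one_le)
    then show ?thesis by linarith
  qed
  then have "\<And>i. s$i * w$i \<le> w$i" "\<And>i. - (s$i * w$i) \<le> w$i" by auto
  then show "s \<bullet> w \<le> vec 1 \<bullet> w" "- (s \<bullet> w) \<le> vec 1 \<bullet> w"
    unfolding inner_vec_def by (auto intro!: sum_mono simp: sum_negf[symmetric])
qed

lemma colsum_use:
  fixes E0 F0 :: "real^'n^'n"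
  assumes cs: "(vec 1 :: real^'n) v* (\<alpha> *\<^sub>R E0 - F0) \<ge> 0" and y: "y \<ge> 0"
  shows "vec 1 \<bullet> (F0 *v y) \<le> \<alpha> * (vec 1 \<bullet> (E0 *v y))"
proof -
  have "0 \<le> ((vec 1 :: real^'n) v* (\<alpha> *\<^sub>R E0 - F0)) \<bullet> y" using inner_nonneg_vec[OF cs y] .
  also have "\<dots> = vec 1 \<bullet> ((\<alpha> *\<^sub>R E0 - F0) *v y)" by (rule dot_lmul_matrix)
  also have "\<dots> = \<alpha> * (vec 1 \<bullet> (E0 *v y)) - vec 1 \<bullet> (F0 *v y)"
    by (simp add: matrix_vector_mult_diff_rdistrib inner_diff_right flip: scaleR_matrix_vector_assoc)
  finally show ?thesis by simp
qed

lemma bound: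
  fixes E0 F0 B :: "real^'n^'n"
  assumes Z: "\<And>i j. i \<noteq> j \<Longrightarrow> E0 $ i $ j \<le> 0"
    and pd: "\<And>v. v \<bullet> (E0 *v v) \<ge> c * (v \<bullet> v)" and c: "c > 0"
    and F0: "F0 \<ge> 0"
    and cs: "(vec 1 :: real^'n) v* (\<alpha> *\<^sub>R E0 - F0) \<ge> 0"
    and BE: "B ** E0 = mat 1"
    and s: "\<And>i. \<bar>s$i\<bar> \<le> 1"
  shows "s \<bullet> (F0 *v (B *v \<delta>)) \<le> \<alpha> * (\<Sum>i\<in>UNIV. \<bar>\<delta>$i\<bar>)"
proof -
  have EB: "E0 ** B = mat 1" using BE matrix_left_right_inverse by blast
  define dp where "dp = (\<chi> i. max (\<delta>$i) 0)"
  define dm where "dm = (\<chi> i. max (- \<delta>$i) 0)"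
  have \<delta>: "\<delta> = dp - dm" by (simp add: vec_eq_iff dp_def dm_def max_def)
  have dp0: "dp \<ge> 0" and dm0: "dm \<ge> 0" by (simp_all add: dp_def dm_def less_eq_vec_def)
  have Ey: "E0 *v (B *v w) = w" for w by (simp add: matrix_vector_mul_assoc EB)
  have ypos: "B *v w \<ge> 0" if "w \<ge> 0" for w
  proof (rule Z_pos[OF Z pd c])
    show "negp (B *v w) \<bullet> (E0 *v (B *v w)) \<le> 0" unfolding Ey using negp_le[OF that] .
  qed
  define y1 where "y1 = B *v dp"
  define y2 where "y2 = B *v dm"
  have y1: "y1 \<ge> 0" "E0 *v y1 = dp" using ypos[OF dp0] Ey by (auto simp: y1_def)
  have y2: "y2 \<ge> 0" "E0 *v y2 = dm" using ypos[OF dm0] Ey by (auto simp: y2_def)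
  have "B *v \<delta> = y1 - y2" by (simp add: \<delta> y1_def y2_def matrix_vector_mult_diff_distrib)
  then have "s \<bullet> (F0 *v (B *v \<delta>)) = s \<bullet> (F0 *v y1) - s \<bullet> (F0 *v y2)"
    by (simp add: matrix_vector_mult_diff_distrib inner_diff_right)
  also have "\<dots> \<le> vec 1 \<bullet> (F0 *v y1) + vec 1 \<bullet> (F0 *v y2)"
    using sgn_bound[OF s mat_nonneg[OF F0 y1(1)]] sgn_bound[OF s mat_nonneg[OF F0 y2(1)]] by linarith
  also have "\<dots> \<le> \<alpha> * (vec 1 \<bullet> dp) + \<alpha> * (vec 1 \<bullet> dm)"
    using colsum_use[OF cs y1(1)] colsum_use[OF cs y2(1)] unfolding y1(2) y2(2) by linarith
  also have "\<dots> = \<alpha> * (\<Sum>i\<in>UNIV. \<bar>\<delta>$i\<bar>)"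
    by (simp add: inner_vec_def dp_def dm_def flip: distrib_left sum.distrib)
       (rule disjI2, rule sum.cong, auto simp: max_def)
  finally show ?thesis .
qed


lemma surj_strong:
  fixes e :: "real^'n \<Rightarrow> real^'n" and E :: "real^'n \<Rightarrow> real^'n^'n"
  assumes e_deriv: "\<And>x. (e has_derivative (\<lambda>h. E x *v h)) (at x)"
    and pd: "\<And>x v. v \<bullet> (E x *v v) \<ge> c * (v \<bullet> v)" and c: "c > 0"
    and lip: "\<And>y z. c * norm (y - z) \<le> norm (e y - e z)"
  shows "\<exists>y. e y = t"
proof -
  define h where "h y = (e y - t) \<bullet> (e y - t)" for y
  have econt: "continuous_on UNIV e"
    by (intro continuous_at_imp_continuous_on ballI has_derivative_continuous[OF e_deriv])
  have hcont: "continuous_on UNIV h" unfolding h_def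
    by (intro continuous_on_inner continuous_on_diff econt continuous_on_const)
  define R where "R = 2 * norm (e 0 - t) / c + 1"
  have "2 * norm (e 0 - t) / c \<ge> 0" using c by (intro divide_nonneg_pos) auto
  then have "R > 0" by (simp add: R_def)
  obtain y0 where y0: "y0 \<in> cball 0 R" "\<And>y. y \<in> cball 0 R \<Longrightarrow> h y0 \<le> h y"
  proof -
    have "continuous_on (cball 0 R) h" using continuous_on_subset[OF hcont subset_UNIV] .
    moreover have "cball (0::real^'n) R \<noteq> {}" using \<open>R > 0\<close> by simp
    ultimately obtain x where "x \<in> cball 0 R" "\<forall>y\<in>cball 0 R. h x \<le> h y"
      using continuous_attains_inf[of "cball 0 R" h] compact_cball[of 0 R] by metis
    then show ?thesis using that by metis
  qed
  have glob: "h y0 \<le> h y" for y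
  proof (cases "y \<in> cball 0 R")
    case True then show ?thesis using y0 by auto
  next
    case False
    then have ny: "norm y > R" by simp
    have "c * norm y \<le> norm (e y - e 0)" using lip[of y 0] by simp
    moreover have "norm (e y - e 0) \<le> norm (e y - t) + norm (e 0 - t)"
      using norm_triangle_ineq4[of "e y - t" "e 0 - t"] by simp
    moreover have "c * R = 2 * norm (e 0 - t) + c" using c by (simp add: R_def field_simps)
    moreover have "c * norm y > c * R" using ny c by simp
    ultimately have "norm (e y - t) > norm (e 0 - t)" using c by linarith
    then have "norm (e 0 - t) ^ 2 < norm (e y - t) ^ 2"
      by (intro power_strict_mono) auto
    then have "h 0 < h y" by (simp add: h_def power2_norm_eq_inner)
    moreover have "h y0 \<le> h 0" using y0 \<open>R > 0\<close> by auto
    ultimately show ?thesis by simp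
  qed
  define w where "w = e y0 - t"
  define \<phi> where "\<phi> \<tau> = h (y0 + \<tau> *\<^sub>R w)" for \<tau> :: real
  have l: "((\<lambda>\<tau>::real. y0 + \<tau> *\<^sub>R w) has_derivative (\<lambda>h. h *\<^sub>R w)) (at 0)"
    by (auto intro!: derivative_eq_intros)
  have "((\<lambda>\<tau>. e (y0 + \<tau> *\<^sub>R w)) has_derivative (\<lambda>h. E y0 *v (h *\<^sub>R w))) (at 0)"
    using diff_chain_at[OF l e_deriv[of "y0 + 0 *\<^sub>R w"]] by (simp add: o_def)
  moreover have "(\<lambda>h. E y0 *v (h *\<^sub>R w)) = (\<lambda>h. h *\<^sub>R (E y0 *v w))"
    by (simp add: matrix_vector_mult_scaleR)
  ultimately have "((\<lambda>\<tau>. e (y0 + \<tau> *\<^sub>R w)) has_derivative (\<lambda>h. h *\<^sub>R (E y0 *v w))) (at 0)"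
    by simp
  from has_derivative_diff[OF this has_derivative_const[of t]]
  have d1: "((\<lambda>\<tau>. e (y0 + \<tau> *\<^sub>R w) - t) has_derivative (\<lambda>h. h *\<^sub>R (E y0 *v w))) (at 0)"
    by simp
  have "(\<phi> has_derivative (\<lambda>h. w \<bullet> (h *\<^sub>R (E y0 *v w)) + (h *\<^sub>R (E y0 *v w)) \<bullet> w)) (at 0)"
    unfolding \<phi>_def h_def using has_derivative_inner[OF d1 d1] by (simp add: w_def)
  moreover have "(\<lambda>h. w \<bullet> (h *\<^sub>R (E y0 *v w)) + (h *\<^sub>R (E y0 *v w)) \<bullet> w) = (*) (2 * (w \<bullet> (E y0 *v w)))"
    by (auto simp: inner_commute)
  ultimately have "DERIV \<phi> 0 :> 2 * (w \<bullet> (E y0 *v w))"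
    unfolding has_field_derivative_def by simp
  moreover have "\<forall>y. \<bar>0 - y\<bar> < 1 \<longrightarrow> \<phi> 0 \<le> \<phi> y"
    unfolding \<phi>_def using glob by simp
  ultimately have "2 * (w \<bullet> (E y0 *v w)) = 0"
    by (intro DERIV_local_min[where f=\<phi> and x=0 and d=1]) auto
  then have "c * (w \<bullet> w) \<le> 0" using pd[of w y0] by simp
  then have "w \<bullet> w \<le> 0" using c by (simp add: mult_le_0_iff)
  then have "w = 0" using inner_ge_zero[of w] by (simp del: inner_ge_zero)
  then show ?thesis by (auto simp: w_def)
qed

lemma inv_deriv:
  fixes e :: "real^'n \<Rightarrow> real^'n" and E :: "real^'n \<Rightarrow> real^'n^'n"
  assumes e_deriv: "\<And>x. (e has_derivative (\<lambda>h. E x *v h)) (at x)"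
    and pd: "\<And>x v. v \<bullet> (E x *v v) \<ge> c * (v \<bullet> v)" and c: "c > 0"
    and lip: "\<And>y z. c * norm (y - z) \<le> norm (e y - e z)"
    and eG: "\<And>z. e (G z) = z" and Ge: "\<And>x. G (e x) = x"
    and BE: "B ** E (G z) = mat 1"
  shows "(G has_derivative (\<lambda>h. B *v h)) (at z)"
proof (rule has_derivative_inverse_basic[where f = e and T = UNIV])
  show "(e has_derivative (\<lambda>h. E (G z) *v h)) (at (G z))" by (rule e_deriv)
  show "bounded_linear ((*v) B)" by (simp add: matrix_vector_mul_bounded_linear)
  show "(*v) B \<circ> (\<lambda>h. E (G z) *v h) = id"
    by (auto simp: fun_eq_iff matrix_vector_mul_assoc BE)
  have Glip: "norm (G a - G b) \<le> norm (a - b) / c" for a b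
    using lip[of "G a" "G b"] c by (simp add: eG field_simps)
  show "continuous (at z) G"
  proof (rule continuous_at_eps_delta[THEN iffD2], intro allI impI)
    fix \<epsilon> :: real assume "\<epsilon> > 0"
    show "\<exists>d>0. \<forall>x'. dist x' z < d \<longrightarrow> dist (G x') (G z) < \<epsilon>"
    proof (intro exI[of _ "c * \<epsilon>"] conjI allI impI)
      show "c * \<epsilon> > 0" using c \<open>\<epsilon> > 0\<close> by simp
      fix x' assume "dist x' z < c * \<epsilon>"
      then have "norm (x' - z) / c < \<epsilon>" using c by (simp add: dist_norm field_simps)
      then show "dist (G x') (G z) < \<epsilon>" using Glip[of x' z] by (simp add: dist_norm)
    qed
  qed
qed (auto simp: eG)


lemma pnorm2: "pnorm 2 (v::real^'n) = norm v"
proof -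
  have "real_of_ereal 2 = 2" by simp
  then show ?thesis
    unfolding pnorm_def norm_vec_def L2_set_def
    by (simp add: powr_half_sqrt sum_nonneg)
qed

lemma sgn_abs_inner: "(\<chi> i. sgn ((v::real^'n)$i)) \<bullet> v = (\<Sum>i\<in>UNIV. \<bar>v$i\<bar>)"
  unfolding inner_vec_def by (auto intro!: sum.cong simp: abs_sgn mult.commute)

theorem theorem1:
  fixes e :: "real^'n \<Rightarrow> real^'n" and f :: "real^'n \<Rightarrow> real^'m \<Rightarrow> real^'n"
    and E :: "real^'n \<Rightarrow> real^'n^'n"
    and F :: "real^'n \<Rightarrow> real^'m \<Rightarrow> real^'n^'n"
    and K :: "real^'n \<Rightarrow> real^'m \<Rightarrow> real^'m^'n"
    and \<alpha> \<epsilon> :: real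
  assumes e_deriv: "\<And>x. (e has_derivative (\<lambda>h. E x *v h)) (at x)"
    and E_cont: "continuous_on UNIV E"
    and f_deriv: "\<And>x u. ((\<lambda>(y, w). f y w) has_derivative
                     (\<lambda>(h, k). F x u *v h + K x u *v k)) (at (x, u))"
    and F_cont: "continuous_on UNIV (\<lambda>(x, u). F x u)"
    and K_cont: "continuous_on UNIV (\<lambda>(x, u). K x u)"
    and \<alpha>: "0 < \<alpha>" "\<alpha> < 1"
    and \<epsilon>: "\<epsilon> > 0"
    and E_pd: "\<And>x. pos_def (E x + transpose (E x) - \<epsilon> *\<^sub>R mat 1)"
    and F_nonneg: "\<And>x u. F x u \<ge> 0"
    and K_nonneg: "\<And>x u. K x u \<ge> 0"
    and E_M: "\<And>x. M_matrix (E x)"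
    and colsum: "\<And>x u. (vec 1 :: real^'n) v* (\<alpha> *\<^sub>R E x - F x u) \<ge> 0"
  shows "well_posed e f \<and> monotone_sys e f \<and> contracting e f \<alpha> \<and>
         (e 0 = f 0 0 \<longrightarrow> positive_sys e f)"
proof -
  have pd: "\<And>x v. v \<bullet> (E x *v v) \<ge> (\<epsilon>/2) * (v \<bullet> v)" using pd_half[OF E_pd] .
  have c: "\<epsilon>/2 > 0" using \<epsilon> by simp
  have Z: "\<And>x i j. i \<noteq> j \<Longrightarrow> E x $ i $ j \<le> 0" using E_M unfolding M_matrix_def by blast
  have emono: "(y - z) \<bullet> (e y - e z) \<ge> (\<epsilon>/2) * ((y - z) \<bullet> (y - z))" for y z
  proof -
    obtain \<tau> where "(y - z) \<bullet> (e y - e z) = (y - z) \<bullet> (E (z + \<tau> *\<^sub>R (y - z)) *v (y - z))"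
      using mvt_line[where g=e and D="\<lambda>x h. E x *v h", OF e_deriv, where w="y - z" and a=z and b=y]
      by blast
    then show ?thesis using pd by simp
  qed
  have lip: "(\<epsilon>/2) * norm (y - z) \<le> norm (e y - e z)" for y z
  proof -
    have "(\<epsilon>/2) * norm (y - z) * norm (y - z) \<le> norm (y - z) * norm (e y - e z)"
      using emono[of y z] norm_cauchy_schwarz[of "y - z" "e y - e z"]
      by (simp add: power2_norm_eq_inner[symmetric] power2_eq_square)
    then show ?thesis
      by (cases "norm (y - z) = 0") (auto simp: mult.commute)
  qed
  have inj: "inj e"
  proof (rule injI)
    fix y z assume "e y = e z"
    then have "(\<epsilon>/2) * norm (y - z) \<le> 0" using lip[of y z] by simp
    then show "y = z" using c by (simp add: mult_le_0_iff)
  qed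
  have surj: "surj e"
    using surj_strong[OF e_deriv pd c lip] by (metis surjI)
  have wp: "well_posed e f"
    unfolding well_posed_def using inj surj by (metis injD surjD)
  define G where "G = inv e"
  have eG: "\<And>z. e (G z) = z" unfolding G_def using surj by (simp add: surj_f_inv_f)
  have Ge: "\<And>x. G (e x) = x" unfolding G_def using inj by simp
  have eord: "z \<le> y" if "e z \<le> e y" for y z
  proof -
    obtain \<tau> where eq: "negp (y - z) \<bullet> (e y - e z) = negp (y - z) \<bullet> (E (z + \<tau> *\<^sub>R (y - z)) *v (y - z))"
      using mvt_line[where g=e and D="\<lambda>x h. E x *v h", OF e_deriv, where w="negp (y - z)" and a=z and b=y]
      by blast
    have "e y - e z \<ge> 0" using that by (simp add: less_eq_vec_def)
    from negp_le[OF this, of "y - z"] eq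
    have "negp (y - z) \<bullet> (E (z + \<tau> *\<^sub>R (y - z)) *v (y - z)) \<le> 0" by simp
    from Z_pos[OF Z pd c this] show ?thesis by (simp add: less_eq_vec_def)
  qed
  define g where "g = (\<lambda>(y, w). f y w)"
  define D where "D = (\<lambda>p. \<lambda>(h, k). F (fst p) (snd p) *v h + K (fst p) (snd p) *v k)"
  have gder: "(g has_derivative D p) (at p)" for p
    using f_deriv[of "fst p" "snd p"] unfolding g_def D_def by simp
  have ford: "f xb ub \<le> f xa ua" if "xb \<le> xa" "ub \<le> ua" for xa xb ua ub
  proof -
    have "f xb ub $ i \<le> f xa ua $ i" for i
    proof -
      obtain \<tau> where eq: "axis i 1 \<bullet> (g (xa, ua) - g (xb, ub)) =
          axis i 1 \<bullet> D ((xb, ub) + \<tau> *\<^sub>R ((xa, ua) - (xb, ub))) ((xa, ua) - (xb, ub))"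
        using mvt_line[where g=g and D=D, OF gder, where w="axis i 1" and a="(xb, ub)" and b="(xa, ua)"]
        by blast
      define p where "p = (xb, ub) + \<tau> *\<^sub>R ((xa, ua) - (xb, ub))"
      have "D p ((xa, ua) - (xb, ub)) = F (fst p) (snd p) *v (xa - xb) + K (fst p) (snd p) *v (ua - ub)"
        by (simp add: D_def)
      also have "\<dots> \<ge> 0"
        using mat_nonneg[OF F_nonneg, of "xa - xb"] mat_nonneg[OF K_nonneg, of "ua - ub"] that
        by (simp add: less_eq_vec_def)
      finally have "0 \<le> axis i 1 \<bullet> D p ((xa, ua) - (xb, ub))"
        by (simp add: less_eq_vec_def cart_eq_inner_axis inner_commute)
      then have "0 \<le> (f xa ua - f xb ub) $ i"
        using eq by (simp add: g_def p_def cart_eq_inner_axis inner_commute)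
      then show ?thesis by simp
    qed
    then show ?thesis by (simp add: less_eq_vec_def)
  qed
  have mono: "monotone_sys e f"
    unfolding monotone_sys_def
  proof (intro allI impI)
    fix xa xb :: "nat \<Rightarrow> real^'n" and ua ub :: "nat \<Rightarrow> real^'m" and t
    assume ta: "is_traj e f xa ua" and tb: "is_traj e f xb ub" and x0: "xb 0 \<le> xa 0"
      and u: "\<forall>t. ub t \<le> ua t"
    show "xb t \<le> xa t"
    proof (induction t)
      case 0 show ?case by (rule x0)
    next
      case (Suc t)
      have "e (xb (Suc t)) \<le> e (xa (Suc t))"
        using ta tb ford[OF Suc u[rule_format]] unfolding is_traj_def by metis
      then show ?case by (rule eord)
    qed
  qed
  have pos: "positive_sys e f" if "e 0 = f 0 0"
    unfolding positive_sys_def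
  proof (intro allI impI)
    fix x :: "nat \<Rightarrow> real^'n" and u :: "nat \<Rightarrow> real^'m" and t
    assume "is_traj e f x u" "0 \<le> x 0" "\<forall>t. 0 \<le> u t"
    moreover have "is_traj e f (\<lambda>_. 0) (\<lambda>_. 0)" using that by (simp add: is_traj_def)
    ultimately show "0 \<le> x t" using mono unfolding monotone_sys_def by metis
  qed
  define l1 :: "real^'n \<Rightarrow> real" where "l1 v = (\<Sum>i\<in>UNIV. \<bar>v$i\<bar>)" for v
  have BEx: "\<exists>B. B ** E y = mat 1" for y
  proof -
    have "\<forall>v. E y *v v = 0 \<longrightarrow> v = 0"
    proof (intro allI impI)
      fix v assume "E y *v v = 0"
      then have "(\<epsilon>/2) * (v \<bullet> v) \<le> 0" using pd[of v y] by simp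
      then have "v \<bullet> v \<le> 0" using c by (simp add: mult_le_0_iff)
      then show "v = 0" using inner_ge_zero[of v] by (simp del: inner_ge_zero)
    qed
    then show ?thesis using matrix_left_invertible_ker by blast
  qed
  define Bi where "Bi z = (SOME B. B ** E (G z) = mat 1)" for z
  have BE: "Bi z ** E (G z) = mat 1" for z
    unfolding Bi_def using someI_ex[OF BEx[of "G z"]] .
  have Gder: "(G has_derivative (\<lambda>h. Bi z *v h)) (at z)" for z
    by (rule inv_deriv[OF e_deriv pd c lip eG Ge BE])
  have step: "l1 (f x u - f x' u) \<le> \<alpha> * l1 (e x - e x')" for x x' u
  proof -
    have hd: "((\<lambda>z. f (G z) u) has_derivative (\<lambda>h. F (G z) u *v (Bi z *v h))) (at z)" for z
    proof -
      have p: "((\<lambda>z. (G z, u)) has_derivative (\<lambda>h. (Bi z *v h, 0))) (at z)"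
        by (intro has_derivative_Pair Gder has_derivative_const)
      from diff_chain_at[OF p f_deriv[of "G z" u]] show ?thesis by (simp add: o_def)
    qed
    define s where "s = (\<chi> i. sgn ((f x u - f x' u)$i))"
    obtain \<tau> where eq: "s \<bullet> (f (G (e x)) u - f (G (e x')) u) =
       s \<bullet> (F (G (e x' + \<tau> *\<^sub>R (e x - e x'))) u *v (Bi (e x' + \<tau> *\<^sub>R (e x - e x')) *v (e x - e x')))"
      using mvt_line[OF hd, where w=s and a="e x'" and b="e x"] by blast
    have sb: "\<bar>s$i\<bar> \<le> 1" for i by (simp add: s_def sgn_real_def)
    have "l1 (f x u - f x' u) = s \<bullet> (f (G (e x)) u - f (G (e x')) u)"
      using sgn_abs_inner[of "f x u - f x' u"] by (simp add: Ge s_def l1_def)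
    also have "\<dots> \<le> \<alpha> * l1 (e x - e x')"
      unfolding eq l1_def by (rule bound[OF Z pd c F_nonneg colsum BE sb])
    finally show ?thesis .
  qed
  have contr: "contracting e f \<alpha>"
    unfolding contracting_def
  proof (intro conjI wp exI[of _ "2::ereal"] allI)
    show "1 \<le> (2::ereal)" by simp
    fix u :: "nat \<Rightarrow> real^'m"
    define b where "b z = (2/\<epsilon>) * l1 (e (fst z) - e (snd z)) + 1" for z :: "(real^'n) \<times> (real^'n)"
    have econt: "continuous_on UNIV e"
      by (intro continuous_at_imp_continuous_on ballI has_derivative_continuous[OF e_deriv])
    have c1: "continuous_on UNIV (\<lambda>z::(real^'n) \<times> (real^'n). e (fst z))"
      by (rule continuous_on_compose2[OF econt continuous_on_fst]) auto
    have c2: "continuous_on UNIV (\<lambda>z::(real^'n) \<times> (real^'n). e (snd z))"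
      by (rule continuous_on_compose2[OF econt continuous_on_snd]) auto
    have l1nn: "l1 v \<ge> 0" for v unfolding l1_def by (simp add: sum_nonneg)
    show "\<exists>b. continuous_on UNIV b \<and> (\<forall>z. 0 < b z) \<and>
          (\<forall>xa xb. is_traj e f xa u \<longrightarrow> is_traj e f xb u \<longrightarrow>
             (\<forall>t. pnorm 2 (xa t - xb t) < \<alpha> ^ t * b (xa 0, xb 0)))"
    proof (intro exI[of _ b] conjI allI impI)
      show "continuous_on UNIV b" unfolding b_def l1_def
        by (intro continuous_intros c1 c2)
      show "0 < b z" for z using l1nn \<epsilon> by (simp add: b_def add_nonneg_pos)
      fix xa xb t assume ta: "is_traj e f xa u" and tb: "is_traj e f xb u"
      have it: "l1 (e (xa t) - e (xb t)) \<le> \<alpha> ^ t * l1 (e (xa 0) - e (xb 0))" for t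
      proof (induction t)
        case 0 show ?case by simp
      next
        case (Suc t)
        have "l1 (e (xa (Suc t)) - e (xb (Suc t))) = l1 (f (xa t) (u t) - f (xb t) (u t))"
          using ta tb by (simp add: is_traj_def)
        also have "\<dots> \<le> \<alpha> * l1 (e (xa t) - e (xb t))" by (rule step)
        also have "\<dots> \<le> \<alpha> * (\<alpha> ^ t * l1 (e (xa 0) - e (xb 0)))"
          using Suc \<alpha> by (simp add: mult_left_mono)
        finally show ?case by simp
      qed
      have "norm (xa t - xb t) \<le> (2/\<epsilon>) * norm (e (xa t) - e (xb t))"
        using lip[of "xa t" "xb t"] \<epsilon> by (simp add: field_simps)
      also have "\<dots> \<le> (2/\<epsilon>) * l1 (e (xa t) - e (xb t))"
        using \<epsilon> norm_le_l1_cart[of "e (xa t) - e (xb t)"] unfolding l1_def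
        by (intro mult_left_mono) auto
      also have "\<dots> \<le> (2/\<epsilon>) * (\<alpha> ^ t * l1 (e (xa 0) - e (xb 0)))"
        using it[of t] \<epsilon> by (intro mult_left_mono) auto
      also have "\<dots> < \<alpha> ^ t * b (xa 0, xb 0)"
      proof -
        have "\<alpha> ^ t > 0" using \<alpha> by simp
        then show ?thesis by (simp add: b_def distrib_left mult.left_commute)
      qed
      finally show "pnorm 2 (xa t - xb t) < \<alpha> ^ t * b (xa 0, xb 0)" unfolding pnorm2 .
    qed
  qed
  show ?thesis using wp mono contr pos by blast
qed

end
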